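(* Let $\mathcal H$ be a Hilbert space, let $\mathfrak H\subset\mathcal H$ be a closed subspace, $\mathfrak N=\mathcal H\ominus\mathfrak H$, and let $A_0:\mathfrak H\to\mathcal H$ be a Hermitian contraction with ${\rm dom}\,A_0=\mathfrak H$. Let $T$ be a qsc-extension of $A_0$ in $\mathcal H$ and let $\tau=\{T;\mathfrak N,\mathfrak N,\mathfrak H\}$ be the pqs-system given by the block decomposition of $T$ with respect to $\mathcal H=\mathfrak N\oplus\mathfrak H$. Then the following are equivalent: (i) $A_0$ is simple; (ii) $T$ is $\mathfrak N$-minimal; (iii) $\tau$ is minimal.
   Context: $A_0$ Hermitian means $(A_0f,g)=(f,A_0g)$ for $f,g\in{\rm dom}\,A_0$. $A_0$ is simple if there is no nonzero subspace of ${\rm dom}\,A_0$ invariant under $A_0$ (i.e. $A_0$ has no selfadjoint part). A quasi-selfadjoint contraction (qsc-operator) is a contraction $T\in\mathbf L(\mathcal H)$ with ${\rm ker}(T-T^* )\neq\{0\}$; $T$ is a qsc-extension of $A_0$ if $A_0\subset T$ and $A_0\subset T^*$ (equivalently ${\rm dom}\,A_0\subset{\rm ker}(T-T^* )$, so ${\rm ran}(T-T^* )\subset\mathfrak N$). $T$ is $\mathfrak N$-minimal if $\overline{\rm span}\{T^n\mathfrak N:n\ge0\}=\mathcal H$. A pqs-system $\{T;\mathfrak N,\mathfrak N,\mathfrak H\}$ has $T=\begin{pmatrix}D&C\\ B&A\end{pmatrix}:\mathfrak N\oplus\mathfrak H\to\mathfrak N\oplus\mathfrak H$ contractive with ${\rm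 ran}(T-T^* )\subset\mathfrak N$; minimal means $\overline{\rm span}\{A^nB\mathfrak N\}=\mathfrak H=\overline{\rm span}\{A^{*n}C^*\mathfrak N\}$. *)

theory Defs
  imports "HOL-Analysis.Analysis"
begin

class complex_vector = real_vector +
  fixes scaleC :: "complex \<Rightarrow> 'a \<Rightarrow> 'a" (infixr \<open>*\<^sub>C\<close> 75)
  assumes scaleC_add_right: "a *\<^sub>C (x + y) = a *\<^sub>C x + a *\<^sub>C y"
    and scaleC_add_left: "(a + b) *\<^sub>C x = a *\<^sub>C x + b *\<^sub>C x"
    and scaleC_scaleC: "a *\<^sub>C (b *\<^sub>C x) = (a * b) *\<^sub>C x"
    and scaleC_one: "1 *\<^sub>C x = x"
    and scaleR_scaleC: "scaleR r = scaleC (complex_of_real r)"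

class complex_normed_vector = complex_vector + real_normed_vector +
  assumes norm_scaleC: "norm (a *\<^sub>C x) = cmod a * norm x"

class complex_inner = complex_normed_vector +
  fixes cinner :: "'a \<Rightarrow> 'a \<Rightarrow> complex"
  assumes cinner_commute: "cinner x y = cnj (cinner y x)"
    and cinner_add_left: "cinner (x + y) z = cinner x z + cinner y z"
    and cinner_scaleC_left: "cinner (a *\<^sub>C x) y = cnj a * cinner x y"
    and cinner_self_real: "Im (cinner x x) = 0"
    and cinner_self_nonneg: "0 \<le> Re (cinner x x)"
    and cinner_self_eq_zero: "cinner x x = 0 \<longleftrightarrow> x = 0"
    and norm_eq_sqrt_cinner: "norm x = sqrt (Re (cinner x x))"

class chilbert_space = complex_inner + complete_space

definition csubspace :: "'a::complex_vector set \<Rightarrow> bool" where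
  "csubspace S = module.subspace (scaleC :: complex \<Rightarrow> 'a \<Rightarrow> 'a) S"

definition cspan :: "'a::complex_vector set \<Rightarrow> 'a set" where
  "cspan S = module.span (scaleC :: complex \<Rightarrow> 'a \<Rightarrow> 'a) S"

definition closed_csubspace :: "'a::complex_normed_vector set \<Rightarrow> bool" where
  "closed_csubspace S \<longleftrightarrow> csubspace S \<and> closed S"

definition orthogonal_complement :: "'a::complex_inner set \<Rightarrow> 'a set" where
  "orthogonal_complement S = {x. \<forall>y\<in>S. cinner y x = 0}"

text \<open>Orthogonal projection onto a closed subspace M (well defined by the projection theorem).\<close>
definition oproj :: "'a::complex_inner set \<Rightarrow> 'a \<Rightarrow> 'a" where
  "oproj M x = (THE y. y \<in> M \<and> x - y \<in> orthogonal_complement M)"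

definition clinear :: "('a::complex_vector \<Rightarrow> 'b::complex_vector) \<Rightarrow> bool" where
  "clinear T \<longleftrightarrow> (\<forall>x y. T (x + y) = T x + T y) \<and> (\<forall>c x. T (c *\<^sub>C x) = c *\<^sub>C T x)"

definition contraction :: "('a::complex_normed_vector \<Rightarrow> 'a) \<Rightarrow> bool" where
  "contraction T \<longleftrightarrow> clinear T \<and> (\<forall>x. norm (T x) \<le> norm x)"

definition is_adjoint :: "('a::complex_inner \<Rightarrow> 'a) \<Rightarrow> ('a \<Rightarrow> 'a) \<Rightarrow> bool" where
  "is_adjoint T Ts \<longleftrightarrow> (\<forall>x y. cinner (T x) y = cinner x (Ts y))"

text \<open>Hermitian contraction A0 : dom A0 = D \<rightarrow> H (values of A0 outside D are irrelevant).\<close>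
definition hermitian_contraction_on :: "'a::complex_inner set \<Rightarrow> ('a \<Rightarrow> 'a) \<Rightarrow> bool" where
  "hermitian_contraction_on D A0 \<longleftrightarrow>
     (\<forall>x\<in>D. \<forall>y\<in>D. A0 (x + y) = A0 x + A0 y) \<and>
     (\<forall>c. \<forall>x\<in>D. A0 (c *\<^sub>C x) = c *\<^sub>C A0 x) \<and>
     (\<forall>x\<in>D. norm (A0 x) \<le> norm x) \<and>
     (\<forall>f\<in>D. \<forall>g\<in>D. cinner (A0 f) g = cinner f (A0 g))"

definition simple_on :: "'a::complex_vector set \<Rightarrow> ('a \<Rightarrow> 'a) \<Rightarrow> bool" where
  "simple_on D A0 \<longleftrightarrow>
     \<not> (\<exists>L. csubspace L \<and> L \<subseteq> D \<and> L \<noteq> {0} \<and> A0 ` L \<subseteq> L)"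

definition qsc_operator :: "('a::complex_inner \<Rightarrow> 'a) \<Rightarrow> ('a \<Rightarrow> 'a) \<Rightarrow> bool" where
  "qsc_operator T Ts \<longleftrightarrow> contraction T \<and> {x. T x = Ts x} \<noteq> {0}"

definition qsc_extension :: "('a::complex_inner \<Rightarrow> 'a) \<Rightarrow> ('a \<Rightarrow> 'a) \<Rightarrow> 'a set \<Rightarrow> ('a \<Rightarrow> 'a) \<Rightarrow> bool" where
  "qsc_extension T Ts D A0 \<longleftrightarrow> qsc_operator T Ts \<and> (\<forall>f\<in>D. T f = A0 f \<and> Ts f = A0 f)"

definition N_minimal :: "('a::complex_normed_vector \<Rightarrow> 'a) \<Rightarrow> 'a set \<Rightarrow> bool" where
  "N_minimal T N \<longleftrightarrow> closure (cspan {(T ^^ n) x | n x. x \<in> N}) = UNIV"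

text \<open>Minimality of the pqs-system {T; N, N, H'} with H = N \<oplus> H', where
  T = [[D, C], [B, A]]: A = P_H' T|H', B = P_H' T|N, C = P_N T|H', hence
  A* = P_H' T*|H' and C* = P_H' T*|N.\<close>
definition pqs_minimal :: "('a::complex_inner \<Rightarrow> 'a) \<Rightarrow> ('a \<Rightarrow> 'a) \<Rightarrow> 'a set \<Rightarrow> 'a set \<Rightarrow> bool" where
  "pqs_minimal T Ts N K \<longleftrightarrow>
     (let A = (\<lambda>x. oproj K (T x)); B = (\<lambda>x. oproj K (T x));
          Aadj = (\<lambda>x. oproj K (Ts x)); Cadj = (\<lambda>x. oproj K (Ts x))
      in closure (cspan {(A ^^ n) (B x) | n x. x \<in> N}) = K \<and>
         closure (cspan {(Aadj ^^ n) (Cadj x) | n x. x \<in> N}) = K)"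

end

theory Submission
  imports Defs
begin


lemma module_scaleC: "module (scaleC :: complex \<Rightarrow> 'a::complex_vector \<Rightarrow> 'a)"
  by unfold_locales (simp_all add: scaleC_add_right scaleC_add_left scaleC_scaleC scaleC_one)

lemma csubspace_iff: "csubspace S \<longleftrightarrow> 0 \<in> S \<and> (\<forall>x\<in>S. \<forall>y\<in>S. x+y\<in>S) \<and> (\<forall>c. \<forall>x\<in>S. c *\<^sub>C x \<in> S)"
  unfolding csubspace_def module.subspace_def[OF module_scaleC] by simp

lemma cspan_superset: "S \<subseteq> cspan S"
  unfolding cspan_def by (rule module.span_superset[OF module_scaleC])

lemma csubspace_cspan: "csubspace (cspan S)"
  unfolding cspan_def csubspace_def by (rule module.subspace_span[OF module_scaleC])

lemma cspan_minimal: "S \<subseteq> T \<Longrightarrow> csubspace T \<Longrightarrow> cspan S \<subseteq> T"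
  unfolding cspan_def csubspace_def by (rule module.span_minimal[OF module_scaleC])

lemma scaleC_diff_right: "a *\<^sub>C (x - y) = a *\<^sub>C x - a *\<^sub>C (y::'a::complex_vector)"
  by (rule module.scale_right_diff_distrib[OF module_scaleC])

lemma cinner_zero_left[simp]: "cinner 0 y = 0"
  using cinner_add_left[of 0 0 y] by simp

lemma cinner_zero_right[simp]: "cinner y 0 = 0"
  by (subst cinner_commute) simp

lemma cinner_add_right: "cinner x (y + z) = cinner x y + cinner x z"
  by (metis cinner_add_left cinner_commute complex_cnj_add)

lemma cinner_scaleC_right: "cinner x (a *\<^sub>C y) = a * cinner x y"
  by (metis cinner_commute cinner_scaleC_left complex_cnj_cnj complex_cnj_mult)

lemma cinner_minus_left: "cinner (- x) y = - cinner x y"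
  using cinner_add_left[of x "-x" y] by (simp add: eq_neg_iff_add_eq_0 add.commute)

lemma cinner_diff_left: "cinner (x - y) z = cinner x z - cinner y z"
  using cinner_add_left[of x "-y" z] cinner_minus_left[of y z] by simp

lemma cinner_diff_right: "cinner x (y - z) = cinner x y - cinner x z"
  by (metis cinner_commute cinner_diff_left complex_cnj_diff)

lemma cinner_scaleR_left: "cinner (r *\<^sub>R x) y = complex_of_real r * cinner x y"
  by (simp add: scaleR_scaleC cinner_scaleC_left)

lemma cinner_self: "cinner x x = complex_of_real ((norm x)^2)"
proof -
  have "(norm x)^2 = Re (cinner x x)" using norm_eq_sqrt_cinner[of x] cinner_self_nonneg[of x] by simp
  then show ?thesis using cinner_self_real[of x] by (simp add: complex_eq_iff)
qed

lemma Re_cinner_sym: "Re (cinner y x) = Re (cinner x y)"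
  by (subst cinner_commute) simp

lemma norm_sq_add: "(norm (x+y))^2 = (norm x)^2 + (norm y)^2 + 2 * Re (cinner x y)"
proof -
  have "complex_of_real ((norm (x+y))^2) = cinner x x + cinner x y + cinner y x + cinner y y"
    by (simp only: cinner_self[symmetric] cinner_add_left cinner_add_right) (simp add: ac_simps)
  then have "(norm (x+y))^2 = Re (cinner x x) + Re (cinner x y) + Re (cinner y x) + Re (cinner y y)"
    by (metis Re_complex_of_real plus_complex.sel(1))
  then show ?thesis by (simp add: cinner_self Re_cinner_sym[of y x])
qed

lemma norm_sq_diff: "(norm (x-y))^2 = (norm x)^2 + (norm y)^2 - 2 * Re (cinner x y)"
proof -
  have "(norm (x+(-y)))^2 = (norm x)^2 + (norm (-y))^2 + 2 * Re (cinner x (-y))" by (rule norm_sq_add)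
  moreover have "cinner x (-y) = - cinner x y" by (metis cinner_diff_right cinner_zero_right diff_0)
  ultimately show ?thesis by simp
qed

lemma Re_polar: "Re (cinner y h) = ((norm (y+h))^2 - (norm (y-h))^2) / 4"
  by (simp add: norm_sq_add norm_sq_diff)

lemma closed_orth: "closed {y. cinner y h = 0}"
proof -
  have "{y. cinner y h = 0} = {y. ((norm (y+h))^2 - (norm (y-h))^2) / 4 = 0}
      \<inter> {y. ((norm (y + \<i> *\<^sub>C h))^2 - (norm (y - \<i> *\<^sub>C h))^2) / 4 = 0}"
    by (auto simp: Re_polar[symmetric] cinner_scaleC_right complex_eq_iff)
  also have "closed \<dots>"
    by (intro closed_Int closed_Collect_eq continuous_intros) auto
  finally show ?thesis .
qed



lemma csubspace_scaleR: "csubspace M \<Longrightarrow> x \<in> M \<Longrightarrow> r *\<^sub>R x \<in> M"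
  by (simp add: csubspace_iff scaleR_scaleC)

lemma csubspace_diff: "csubspace M \<Longrightarrow> x \<in> M \<Longrightarrow> y \<in> M \<Longrightarrow> x - y \<in> M"
proof -
  assume a: "csubspace M" "x \<in> M" "y \<in> M"
  have "(-1) *\<^sub>R y \<in> M" using a csubspace_scaleR by blast
  then show ?thesis using a by (simp add: csubspace_iff) (metis diff_conv_add_uminus)
qed

lemma orth_lemma:
  fixes z m :: "'a::complex_inner"
  assumes "\<And>t. (norm z)^2 \<le> (norm (z - t *\<^sub>C m))^2"
  shows "cinner m z = 0"
proof -
  define c where "c = cinner m z"
  define a where "a = (norm m)^2"
  define s where "s = 1 / (a + 1)"
  define q where "q = (cmod c)^2"
  have a0: "a \<ge> 0" unfolding a_def by simp
  have q0: "q \<ge> 0" unfolding q_def by simp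
  have s0: "s > 0" unfolding s_def using a0 by simp
  let ?t = "complex_of_real s * c"
  have "(norm z)^2 \<le> (norm z)^2 + (norm (?t *\<^sub>C m))^2 - 2 * Re (cinner z (?t *\<^sub>C m))"
    using assms[of ?t] norm_sq_diff[of z "?t *\<^sub>C m"] by simp
  moreover have "(norm (?t *\<^sub>C m))^2 = s^2 * q * a"
    using s0 by (simp add: norm_scaleC q_def a_def norm_mult power_mult_distrib)
  moreover have "Re (cinner z (?t *\<^sub>C m)) = s * q"
  proof -
    have "cinner z (?t *\<^sub>C m) = ?t * cnj c"
      by (simp add: cinner_scaleC_right c_def cinner_commute[of m z])
    also have "\<dots> = complex_of_real s * (c * cnj c)" by simp
    also have "\<dots> = complex_of_real (s * q)" by (simp add: q_def complex_norm_square[symmetric])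
    finally show ?thesis by simp
  qed
  ultimately have "0 \<le> s^2 * q * a - 2 * s * q" by simp
  then have "0 \<le> s * q * (s * a - 2)" by (simp add: algebra_simps power2_eq_square)
  moreover have "s * a < 1" unfolding s_def using a0 by simp
  moreover have "s * q * (s * a - 2) \<le> 0" using s0 q0 \<open>s*a<1\<close> by (intro mult_nonneg_nonpos) auto
  ultimately have "s*q*(s*a-2) = 0" by linarith
  then have "q = 0" using s0 \<open>s*a<1\<close> by auto
  then show ?thesis unfolding q_def c_def by simp
qed

lemma projection_exists:
  fixes M :: "'a::chilbert_space set"
  assumes "closed_csubspace M"
  shows "\<exists>y\<in>M. x - y \<in> orthogonal_complement M"
proof -
  have sub: "csubspace M" and cl: "closed M" using assms by (auto simp: closed_csubspace_def)
  have M0: "0 \<in> M" using sub by (simp add: csubspace_iff)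
  have Madd: "\<And>u v. u \<in> M \<Longrightarrow> v \<in> M \<Longrightarrow> u + v \<in> M" using sub by (simp add: csubspace_iff)
  have MC: "\<And>c u. u \<in> M \<Longrightarrow> c *\<^sub>C u \<in> M" using sub by (simp add: csubspace_iff)
  define d where "d = Inf ((\<lambda>m. norm (x - m)) ` M)"
  have bdd: "bdd_below ((\<lambda>m. norm (x-m)) ` M)" by (rule bdd_belowI[of _ 0]) auto
  have ne: "(\<lambda>m. norm (x-m)) ` M \<noteq> {}" using M0 by auto
  have dle: "\<And>m. m\<in>M \<Longrightarrow> d \<le> norm (x-m)" unfolding d_def using bdd by (auto intro: cInf_lower)
  have d0: "0 \<le> d" unfolding d_def using ne by (auto intro: cInf_greatest)
  have approx: "\<And>e. e>0 \<Longrightarrow> \<exists>m\<in>M. norm (x - m) < d + e"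
  proof -
    fix e :: real assume "e > 0"
    then have "Inf ((\<lambda>m. norm (x - m)) ` M) < d + e" unfolding d_def by simp
    from cInf_lessD[OF ne this] show "\<exists>m\<in>M. norm (x - m) < d + e" by auto
  qed
  have "\<forall>n. \<exists>m\<in>M. (norm (x-m))^2 < d^2 + inverse (real (Suc n))"
  proof
    fix n
    define t where "t = d^2 + inverse (real (Suc n))"
    have "d < sqrt t" unfolding t_def using d0
      by (metis add.commute inverse_positive_iff_positive less_add_same_cancel2 of_nat_0_less_iff
          real_sqrt_less_iff real_sqrt_pow2_iff zero_less_Suc real_sqrt_abs abs_of_nonneg)
    then obtain m where m: "m \<in> M" "norm (x - m) < d + (sqrt t - d)" using approx[of "sqrt t - d"] by auto
    then have "norm (x - m) < sqrt t" by simp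
    then have "(norm (x-m))^2 < t" using real_less_rsqrt by (metis norm_ge_zero real_sqrt_less_iff real_sqrt_pow2_iff real_sqrt_abs abs_norm_cancel)
    then show "\<exists>m\<in>M. (norm (x-m))^2 < d^2 + inverse (real (Suc n))" using m(1) unfolding t_def by blast
  qed
  then obtain m where mM: "\<And>n. m n \<in> M" and mle: "\<And>n. (norm (x - m n))^2 < d^2 + inverse (real (Suc n))"
    by metis
  have par: "(norm (m a - m b))^2 \<le> 2 * inverse (real (Suc a)) + 2 * inverse (real (Suc b))" for a b
  proof -
    define u where "u = x - m a"
    define v where "v = x - m b"
    have pl: "(norm (u+v))^2 + (norm (u-v))^2 = 2 * (norm u)^2 + 2 * (norm v)^2"
      by (simp add: norm_sq_add norm_sq_diff)
    define mid where "mid = (1/2) *\<^sub>R (m a + m b)"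
    have midM: "mid \<in> M" unfolding mid_def using mM Madd csubspace_scaleR[OF sub] by blast
    have "u + v = 2 *\<^sub>R (x - mid)" unfolding u_def v_def mid_def by (simp add: algebra_simps scaleR_2)
    then have "(norm (u+v))^2 = 4 * (norm (x - mid))^2" by (simp add: power_mult_distrib)
    moreover have "d^2 \<le> (norm (x - mid))^2" using dle[OF midM] d0 by (simp add: power_mono)
    moreover have "(norm (u - v))^2 = (norm (m a - m b))^2" unfolding u_def v_def by (simp add: norm_minus_commute)
    moreover have "(norm u)^2 < d^2 + inverse (real (Suc a))" using mle[of a] unfolding u_def .
    moreover have "(norm v)^2 < d^2 + inverse (real (Suc b))" using mle[of b] unfolding v_def .
    ultimately show ?thesis using pl by linarith
  qed
  have "Cauchy m"
  proof (rule metric_CauchyI)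
    fix e :: real assume e: "e > 0"
    then have "e^2/4 > 0" by simp
    then obtain N where N: "inverse (real (Suc N)) < e^2/4" using reals_Archimedean by blast
    show "\<exists>N. \<forall>a\<ge>N. \<forall>b\<ge>N. dist (m a) (m b) < e"
    proof (intro exI allI impI)
      fix a b assume ab: "N \<le> a" "N \<le> b"
      have "inverse (real (Suc a)) \<le> inverse (real (Suc N))" using ab by (simp add: le_imp_inverse_le)
      moreover have "inverse (real (Suc b)) \<le> inverse (real (Suc N))" using ab by (simp add: le_imp_inverse_le)
      ultimately have "(norm (m a - m b))^2 < e^2" using par[of a b] N by linarith
      then have "norm (m a - m b) < e" using e by (smt (verit) power_mono norm_ge_zero)
      then show "dist (m a) (m b) < e" by (simp add: dist_norm)
    qed
  qed
  then obtain y where lim: "m \<longlonglongrightarrow> y" using Cauchy_convergent_iff convergent_def by blast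
  have yM: "y \<in> M" using cl mM lim closed_sequentially by blast
  have "(\<lambda>n. (norm (x - m n))^2) \<longlonglongrightarrow> (norm (x - y))^2"
    by (intro tendsto_intros lim)
  moreover have "(\<lambda>n. d^2 + inverse (real (Suc n))) \<longlonglongrightarrow> d^2 + 0"
    by (intro tendsto_intros LIMSEQ_inverse_real_of_nat)
  ultimately have "(norm (x - y))^2 \<le> d^2 + 0"
    using mle by (intro LIMSEQ_le[of "\<lambda>n. (norm (x - m n))^2" _ "\<lambda>n. d^2 + inverse (real (Suc n))"])
      (auto intro: less_imp_le)
  then have ymin: "\<And>w. w \<in> M \<Longrightarrow> (norm (x - y))^2 \<le> (norm (x - w))^2"
    using dle d0 by (smt (verit) power_mono)
  have "\<forall>w\<in>M. cinner w (x - y) = 0"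
  proof
    fix w assume w: "w \<in> M"
    show "cinner w (x - y) = 0"
    proof (rule orth_lemma)
      fix t
      have "y + t *\<^sub>C w \<in> M" using Madd MC w yM by blast
      from ymin[OF this] show "(norm (x - y))^2 \<le> (norm (x - y - t *\<^sub>C w))^2" by (simp add: algebra_simps)
    qed
  qed
  then show ?thesis using yM unfolding orthogonal_complement_def by blast
qed



lemma closure_csubspace:
  fixes S :: "'a::complex_normed_vector set"
  assumes "csubspace S" shows "csubspace (closure S)"
proof -
  have S0: "0 \<in> S" and Sadd: "\<And>u v. u \<in> S \<Longrightarrow> v \<in> S \<Longrightarrow> u + v \<in> S"
    and SC: "\<And>c u. u \<in> S \<Longrightarrow> c *\<^sub>C u \<in> S" using assms by (auto simp: csubspace_iff)
  have "0 \<in> closure S" using S0 closure_subset by blast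
  moreover have "\<forall>x\<in>closure S. \<forall>y\<in>closure S. x + y \<in> closure S"
  proof (intro ballI)
    fix x y assume x: "x \<in> closure S" and y: "y \<in> closure S"
    show "x + y \<in> closure S" unfolding closure_approachable
    proof (intro allI impI)
      fix e :: real assume e: "e > 0"
      obtain x' where x': "x' \<in> S" "dist x' x < e/2" using x e unfolding closure_approachable by (meson half_gt_zero)
      obtain y' where y': "y' \<in> S" "dist y' y < e/2" using y e unfolding closure_approachable by (meson half_gt_zero)
      have "dist (x' + y') (x + y) \<le> dist x' x + dist y' y" by (rule dist_triangle_add)
      then show "\<exists>z\<in>S. dist z (x + y) < e" using x' y' Sadd by (intro bexI[of _ "x'+y'"]) auto
    qed
  qed
  moreover have "\<forall>c. \<forall>x\<in>closure S. c *\<^sub>C x \<in> closure S"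
  proof (intro allI ballI)
    fix c x assume x: "x \<in> closure S"
    show "c *\<^sub>C x \<in> closure S"
    proof (cases "c = 0")
      case True
      then have "c *\<^sub>C x = 0" using scaleR_scaleC[of 0] by (metis of_real_0 scale_zero_left)
      then show ?thesis using S0 closure_subset by auto
    next
      case False
      then have cpos: "cmod c > 0" by simp
      show ?thesis unfolding closure_approachable
      proof (intro allI impI)
        fix e :: real assume e: "e > 0"
        then have "e / cmod c > 0" using cpos by simp
        then obtain x' where x': "x' \<in> S" "dist x' x < e / cmod c" using x unfolding closure_approachable by blast
        have "dist (c *\<^sub>C x') (c *\<^sub>C x) = cmod c * dist x' x"
          by (simp add: dist_norm scaleC_diff_right[symmetric] norm_scaleC)
        also have "\<dots> < cmod c * (e / cmod c)" by (rule mult_strict_left_mono[OF x'(2) cpos])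
        also have "\<dots> = e" using cpos by simp
        finally show "\<exists>z\<in>S. dist z (c *\<^sub>C x) < e" using x' SC by blast
      qed
    qed
  qed
  ultimately show ?thesis by (simp add: csubspace_iff)
qed

lemma csubspace_orth_vec: "csubspace {y. cinner y h = 0}"
  by (simp add: csubspace_iff cinner_add_left cinner_scaleC_left)

lemma orth_closure_span:
  assumes "\<forall>s\<in>S. cinner s h = 0" and "y \<in> closure (cspan S)"
  shows "cinner y h = 0"
proof -
  have "cspan S \<subseteq> {y. cinner y h = 0}" using assms(1) csubspace_orth_vec by (intro cspan_minimal) auto
  then have "closure (cspan S) \<subseteq> {y. cinner y h = 0}" using closed_orth by (intro closure_minimal)
  then show ?thesis using assms(2) by auto
qed

lemma cinner_self_zero: "cinner x x = 0 \<Longrightarrow> x = 0"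
  using cinner_self_eq_zero by blast

lemma dense_crit:
  fixes Q :: "'a::chilbert_space set"
  assumes "closed_csubspace Q"
  shows "closure (cspan S) = Q \<longleftrightarrow> S \<subseteq> Q \<and> (\<forall>h\<in>Q. (\<forall>s\<in>S. cinner s h = 0) \<longrightarrow> h = 0)"
proof
  assume eq: "closure (cspan S) = Q"
  have "S \<subseteq> Q" using eq cspan_superset closure_subset by blast
  moreover have "\<forall>h\<in>Q. (\<forall>s\<in>S. cinner s h = 0) \<longrightarrow> h = 0"
  proof (intro ballI impI)
    fix h assume h: "h \<in> Q" "\<forall>s\<in>S. cinner s h = 0"
    have "cinner h h = 0" using orth_closure_span[OF h(2)] h(1) eq by blast
    then show "h = 0" by (rule cinner_self_zero)
  qed
  ultimately show "S \<subseteq> Q \<and> (\<forall>h\<in>Q. (\<forall>s\<in>S. cinner s h = 0) \<longrightarrow> h = 0)" by blast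
next
  assume a: "S \<subseteq> Q \<and> (\<forall>h\<in>Q. (\<forall>s\<in>S. cinner s h = 0) \<longrightarrow> h = 0)"
  have Qs: "csubspace Q" and Qc: "closed Q" using assms by (auto simp: closed_csubspace_def)
  have "cspan S \<subseteq> Q" using a Qs by (intro cspan_minimal) auto
  then have CQ: "closure (cspan S) \<subseteq> Q" using Qc by (intro closure_minimal)
  moreover have "Q \<subseteq> closure (cspan S)"
  proof
    fix q assume q: "q \<in> Q"
    have "closed_csubspace (closure (cspan S))"
      by (simp add: closed_csubspace_def closure_csubspace csubspace_cspan)
    from projection_exists[OF this, of q] obtain c where c: "c \<in> closure (cspan S)"
      "q - c \<in> orthogonal_complement (closure (cspan S))" by blast
    have "q - c \<in> Q" using q c CQ csubspace_diff[OF Qs] by blast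
    moreover have "\<forall>s\<in>S. cinner s (q - c) = 0"
      using c(2) cspan_superset closure_subset unfolding orthogonal_complement_def by blast
    ultimately have "q - c = 0" using a by blast
    then show "q \<in> closure (cspan S)" using c by simp
  qed
  ultimately show "closure (cspan S) = Q" by blast
qed

lemma orth_compl_diff: "u \<in> orthogonal_complement M \<Longrightarrow> v \<in> orthogonal_complement M \<Longrightarrow> u - v \<in> orthogonal_complement M"
  by (simp add: orthogonal_complement_def cinner_diff_right)

lemma K_orth:
  assumes "v \<in> K" "x \<in> orthogonal_complement K" shows "cinner x v = 0"
proof -
  have "cinner v x = 0" using assms unfolding orthogonal_complement_def by blast
  then show ?thesis by (metis cinner_commute complex_cnj_zero)
qed


lemma oproj_props:
  fixes K :: "'a::chilbert_space set"
  assumes "closed_csubspace K"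
  shows "oproj K x \<in> K \<and> x - oproj K x \<in> orthogonal_complement K"
proof -
  have Ks: "csubspace K" using assms by (simp add: closed_csubspace_def)
  obtain y where y: "y \<in> K" "x - y \<in> orthogonal_complement K" using projection_exists[OF assms] by blast
  have uq: "\<And>z. z \<in> K \<and> x - z \<in> orthogonal_complement K \<Longrightarrow> z = y"
  proof -
    fix z assume z: "z \<in> K \<and> x - z \<in> orthogonal_complement K"
    have "z - y \<in> K" using z y csubspace_diff[OF Ks] by blast
    moreover have "z - y \<in> orthogonal_complement K"
      using orth_compl_diff[of "x - y" K "x - z"] y z by simp
    ultimately have "cinner (z - y) (z - y) = 0" by (rule K_orth)
    then show "z = y" using cinner_self_zero[of "z - y"] by (metis eq_iff_diff_eq_0)
  qed
  have "oproj K x = y" unfolding oproj_def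
    by (rule the_equality) (use y uq in blast)+
  then show ?thesis using y by simp
qed

lemma orth_in_K:
  fixes K :: "'a::chilbert_space set"
  assumes "closed_csubspace K" and "\<forall>y\<in>orthogonal_complement K. cinner y h = 0"
  shows "h \<in> K"
proof -
  let ?p = "oproj K h"
  have p: "?p \<in> K" "h - ?p \<in> orthogonal_complement K" using oproj_props[OF assms(1)] by auto
  have "cinner (h - ?p) h = 0" using assms(2) p by blast
  moreover have "cinner ?p (h - ?p) = 0" using p unfolding orthogonal_complement_def by blast
  then have "cinner (h - ?p) ?p = 0" by (metis cinner_commute complex_cnj_zero)
  ultimately have "cinner (h - ?p) (h - ?p) = 0" by (simp add: cinner_diff_right)
  then have "h = ?p" using cinner_self_zero[of "h - ?p"] by (metis eq_iff_diff_eq_0)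
  then show ?thesis using p by simp
qed



lemma oproj_id:
  fixes K :: "'a::chilbert_space set"
  assumes K: "closed_csubspace K" and v: "v \<in> K" shows "oproj K v = v"
proof -
  have p: "oproj K v \<in> K" "v - oproj K v \<in> orthogonal_complement K" using oproj_props[OF K] by auto
  have "v - oproj K v \<in> K" using K v p(1) csubspace_diff by (auto simp: closed_csubspace_def)
  then have "cinner (v - oproj K v) (v - oproj K v) = 0" using p(2) by (rule K_orth)
  then show ?thesis using cinner_self_zero[of "v - oproj K v"] by (metis eq_iff_diff_eq_0)
qed

lemma iter_adj:
  fixes U Us :: "'a::complex_inner \<Rightarrow> 'a"
  assumes adj: "\<And>x y. cinner (U x) y = cinner x (Us y)"
  shows "cinner ((U^^n) x) y = cinner x ((Us^^n) y)"
proof (induction n arbitrary: y)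
  case 0 show ?case by (simp only: funpow_0)
next
  case (Suc n)
  have "cinner ((U^^Suc n) x) y = cinner ((U^^n) x) (Us y)" by (simp add: adj)
  also have "\<dots> = cinner x ((Us^^n) (Us y))" by (rule Suc)
  also have "\<dots> = cinner x ((Us^^Suc n) y)" by (simp add: funpow_swap1)
  finally show ?case .
qed

lemma perp_N_iff:
  fixes K :: "'a::chilbert_space set"
  assumes K: "closed_csubspace K"
  shows "(\<forall>x\<in>orthogonal_complement K. cinner x v = 0) \<longleftrightarrow> v \<in> K"
  using orth_in_K[OF K] K_orth by blast

lemma S_perp_iff:
  fixes K :: "'a::chilbert_space set" and U Us :: "'a \<Rightarrow> 'a"
  assumes K: "closed_csubspace K" and adj: "\<And>x y. cinner (U x) y = cinner x (Us y)"
  shows "(\<forall>s\<in>{(U ^^ n) x | n x. x \<in> orthogonal_complement K}. cinner s h = 0)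
     \<longleftrightarrow> (\<forall>n. (Us^^n) h \<in> K)"
proof -
  have "(\<forall>s\<in>{(U ^^ n) x | n x. x \<in> orthogonal_complement K}. cinner s h = 0)
     \<longleftrightarrow> (\<forall>n. \<forall>x\<in>orthogonal_complement K. cinner x ((Us^^n) h) = 0)"
    using iter_adj[OF adj] by force
  also have "\<dots> \<longleftrightarrow> (\<forall>n. (Us^^n) h \<in> K)" using perp_N_iff[OF K] by blast
  finally show ?thesis .
qed

lemma closed_csubspace_UNIV: "closed_csubspace UNIV"
  by (simp add: closed_csubspace_def csubspace_iff)

lemma Nmin_iff:
  fixes K :: "'a::chilbert_space set" and U Us :: "'a \<Rightarrow> 'a"
  assumes K: "closed_csubspace K" and adj: "\<And>x y. cinner (U x) y = cinner x (Us y)"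
  shows "N_minimal U (orthogonal_complement K) \<longleftrightarrow> (\<forall>h. (\<forall>n. (Us^^n) h \<in> K) \<longrightarrow> h = 0)"
  unfolding N_minimal_def dense_crit[OF closed_csubspace_UNIV] S_perp_iff[OF K adj] by simp

lemma pqs_part_iff:
  fixes K :: "'a::chilbert_space set" and U Us :: "'a \<Rightarrow> 'a"
  assumes K: "closed_csubspace K" and adj: "\<And>x y. cinner (U x) y = cinner x (Us y)"
  shows "closure (cspan {((\<lambda>x. oproj K (U x)) ^^ n) ((\<lambda>x. oproj K (U x)) x) | n x. x \<in> orthogonal_complement K}) = K
     \<longleftrightarrow> (\<forall>h. (\<forall>n. (Us^^n) h \<in> K) \<longrightarrow> h = 0)"
proof -
  define A where "A = (\<lambda>x. oproj K (U x))"
  define A' where "A' = (\<lambda>x. oproj K (Us x))"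
  define N where "N = orthogonal_complement K"
  have AK: "\<And>z. A z \<in> K" unfolding A_def using oproj_props[OF K] by blast
  have A'K: "\<And>z. A' z \<in> K" unfolding A'_def using oproj_props[OF K] by blast
  have Pl: "cinner (oproj K y) w = cinner y w" if "w \<in> K" for y w
  proof -
    have "cinner (y - oproj K y) w = 0" using that oproj_props[OF K] K_orth by blast
    then show ?thesis by (simp add: cinner_diff_left)
  qed
  have Pr: "cinner z (oproj K y) = cinner z y" if "z \<in> K" for y z
    using Pl[OF that, of y] by (metis cinner_commute)
  have AA': "cinner (A z) w = cinner z (A' w)" if "z \<in> K" "w \<in> K" for z w
    unfolding A_def A'_def using Pl[OF that(2)] Pr[OF that(1)] adj by simp
  have AnK: "(A^^n) z \<in> K" if "z \<in> K" for n z
    using that by (cases n) (simp_all add: AK)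
  have iter: "cinner ((A^^n) z) w = cinner z ((A'^^n) w)" if "z \<in> K" "w \<in> K" for n z w
    using that
  proof (induction n arbitrary: w)
    case 0 show ?case by (simp only: funpow_0)
  next
    case (Suc n)
    have "cinner ((A^^Suc n) z) w = cinner ((A^^n) z) (A' w)" using AA' AnK Suc.prems by simp
    also have "\<dots> = cinner z ((A'^^n) (A' w))" using Suc.IH Suc.prems A'K by blast
    also have "\<dots> = cinner z ((A'^^Suc n) w)" by (simp add: funpow_swap1)
    finally show ?case .
  qed
  have A'nK: "(A'^^n) w \<in> K" if "w \<in> K" for n w
    using that by (cases n) (simp_all add: A'K)
  have key: "(\<forall>s\<in>{(A ^^ n) (A x) | n x. x \<in> N}. cinner s h = 0) \<longleftrightarrow> (\<forall>n. (Us^^n) h \<in> K)"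
    if h: "h \<in> K" for h
  proof -
    have e1: "cinner ((A ^^ n) (A x)) h = cinner x (Us ((A'^^n) h))" for n x
    proof -
      have "cinner ((A ^^ n) (A x)) h = cinner (A x) ((A'^^n) h)" using iter AK h by blast
      also have "\<dots> = cinner (U x) ((A'^^n) h)" unfolding A_def using Pl A'nK h by blast
      also have "\<dots> = cinner x (Us ((A'^^n) h))" by (rule adj)
      finally show ?thesis .
    qed
    have "(\<forall>s\<in>{(A ^^ n) (A x) | n x. x \<in> N}. cinner s h = 0)
        \<longleftrightarrow> (\<forall>n. \<forall>x\<in>N. cinner x (Us ((A'^^n) h)) = 0)" using e1 by force
    also have "\<dots> \<longleftrightarrow> (\<forall>n. Us ((A'^^n) h) \<in> K)" using perp_N_iff[OF K] unfolding N_def by blast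
    also have "\<dots> \<longleftrightarrow> (\<forall>n. (Us^^n) h \<in> K)"
    proof
      assume a: "\<forall>n. Us ((A'^^n) h) \<in> K"
      have "(Us^^n) h = (A'^^n) h" for n
      proof (induction n)
        case 0 show ?case by simp
      next
        case (Suc n)
        have "(Us^^Suc n) h = Us ((A'^^n) h)" using Suc by simp
        also have "\<dots> = A' ((A'^^n) h)" using oproj_id[OF K] a unfolding A'_def by simp
        finally show ?case by simp
      qed
      then show "\<forall>n. (Us^^n) h \<in> K" using A'nK h by simp
    next
      assume a: "\<forall>n. (Us^^n) h \<in> K"
      have eq: "(Us^^n) h = (A'^^n) h" for n
      proof (induction n)
        case 0 show ?case by simp
      next
        case (Suc n)
        have "(A'^^Suc n) h = A' ((Us^^n) h)" using Suc by simp
        also have "\<dots> = oproj K (Us ((Us^^n) h))" by (simp only: A'_def)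
        also have "\<dots> = (Us^^Suc n) h" using oproj_id[OF K] a[rule_format, of "Suc n"] by simp
        finally show ?case by simp
      qed
      show "\<forall>n. Us ((A'^^n) h) \<in> K"
      proof
        fix n
        have "Us ((A'^^n) h) = (Us^^Suc n) h" using eq[of n] by simp
        then show "Us ((A'^^n) h) \<in> K" using a[rule_format, of "Suc n"] by simp
      qed
    qed
    finally show ?thesis .
  qed
  have sub: "{(A ^^ n) (A x) | n x. x \<in> N} \<subseteq> K" using AnK AK by blast
  have "closure (cspan {(A ^^ n) (A x) | n x. x \<in> N}) = K
     \<longleftrightarrow> (\<forall>h\<in>K. (\<forall>s\<in>{(A ^^ n) (A x) | n x. x \<in> N}. cinner s h = 0) \<longrightarrow> h = 0)"
    by (simp only: dense_crit[OF K] sub simp_thms)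
  also have "\<dots> \<longleftrightarrow> (\<forall>h\<in>K. (\<forall>n. (Us^^n) h \<in> K) \<longrightarrow> h = 0)"
    using key by simp
  also have "\<dots> \<longleftrightarrow> (\<forall>h. (\<forall>n. (Us^^n) h \<in> K) \<longrightarrow> h = 0)"
  proof
    assume a: "\<forall>h\<in>K. (\<forall>n. (Us^^n) h \<in> K) \<longrightarrow> h = 0"
    show "\<forall>h. (\<forall>n. (Us^^n) h \<in> K) \<longrightarrow> h = 0"
    proof (intro allI impI)
      fix h assume h: "\<forall>n. (Us^^n) h \<in> K"
      have "h \<in> K" using h[rule_format, of 0] by simp
      then show "h = 0" using a h by blast
    qed
  qed blast
  finally show ?thesis unfolding A_def N_def .
qed

lemma simple_iff:
  fixes K :: "'a::chilbert_space set" and U Us :: "'a \<Rightarrow> 'a"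
  assumes K: "closed_csubspace K" and adj: "\<And>x y. cinner (U x) y = cinner x (Us y)"
    and ext: "\<And>f. f \<in> K \<Longrightarrow> Us f = A0 f"
  shows "simple_on K A0 \<longleftrightarrow> (\<forall>h. (\<forall>n. (Us^^n) h \<in> K) \<longrightarrow> h = 0)"
proof
  assume s: "simple_on K A0"
  define Z where "Z = {h. \<forall>n. (Us^^n) h \<in> K}"
  have Zalt: "Z = {h. \<forall>n. \<forall>x\<in>orthogonal_complement K. cinner ((U^^n) x) h = 0}"
    unfolding Z_def using iter_adj[OF adj] perp_N_iff[OF K] by auto
  have "csubspace Z" unfolding Zalt csubspace_iff
    by (simp add: cinner_add_right cinner_scaleC_right)
  moreover have "Z \<subseteq> K" unfolding Z_def by (metis (mono_tags, lifting) funpow_0 mem_Collect_eq subsetI)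
  moreover have "A0 ` Z \<subseteq> Z"
  proof
    fix y assume "y \<in> A0 ` Z"
    then obtain h where h: "h \<in> Z" "y = A0 h" by blast
    have hK: "h \<in> K" using h(1) unfolding Z_def by (metis (mono_tags, lifting) funpow_0 mem_Collect_eq)
    have "y = Us h" using h ext hK by simp
    moreover have "(Us^^n) (Us h) \<in> K" for n
      using h(1) unfolding Z_def by (metis (mono_tags, lifting) funpow_Suc_right comp_apply mem_Collect_eq)
    ultimately show "y \<in> Z" unfolding Z_def by simp
  qed
  ultimately have "Z = {0}" using s unfolding simple_on_def by blast
  then show "\<forall>h. (\<forall>n. (Us^^n) h \<in> K) \<longrightarrow> h = 0" unfolding Z_def by blast
next
  assume c: "\<forall>h. (\<forall>n. (Us^^n) h \<in> K) \<longrightarrow> h = 0"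
  show "simple_on K A0" unfolding simple_on_def
  proof
    assume "\<exists>L. csubspace L \<and> L \<subseteq> K \<and> L \<noteq> {0} \<and> A0 ` L \<subseteq> L"
    then obtain L where L: "csubspace L" "L \<subseteq> K" "L \<noteq> {0}" "A0 ` L \<subseteq> L" by blast
    have "0 \<in> L" using L(1) by (simp add: csubspace_iff)
    then obtain h where h: "h \<in> L" "h \<noteq> 0" using L(3) by blast
    have "(Us^^n) h \<in> L" for n
    proof (induction n)
      case 0 show ?case using h by simp
    next
      case (Suc n)
      have "(Us^^Suc n) h = A0 ((Us^^n) h)" using ext Suc L(2) by auto
      then show ?case using Suc L(4) by auto
    qed
    then have "\<forall>n. (Us^^n) h \<in> K" using L(2) by blast
    then show False using c h by blast
  qed
qed

theorem proposition7p1: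
  fixes K :: "'a::chilbert_space set"
    and A0 T Ts :: "'a \<Rightarrow> 'a"
  assumes "closed_csubspace K"
    and "hermitian_contraction_on K A0"
    and "is_adjoint T Ts"
    and "qsc_extension T Ts K A0"
  shows "(simple_on K A0 \<longleftrightarrow> N_minimal T (orthogonal_complement K)) \<and>
         (N_minimal T (orthogonal_complement K) \<longleftrightarrow>
            pqs_minimal T Ts (orthogonal_complement K) K)"
proof -
  have K: "closed_csubspace K" by fact
  have adj1: "\<And>x y. cinner (T x) y = cinner x (Ts y)" using assms(3) by (simp add: is_adjoint_def)
  have adj2: "\<And>x y. cinner (Ts x) y = cinner x (T y)"
  proof -
    fix x y
    have "cinner (Ts x) y = cnj (cinner y (Ts x))" by (rule cinner_commute)
    also have "\<dots> = cnj (cinner (T y) x)" by (simp add: adj1)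
    also have "\<dots> = cinner x (T y)" by (metis cinner_commute)
    finally show "cinner (Ts x) y = cinner x (T y)" .
  qed
  have e1: "\<And>f. f \<in> K \<Longrightarrow> Ts f = A0 f" and e2: "\<And>f. f \<in> K \<Longrightarrow> T f = A0 f"
    using assms(4) by (auto simp: qsc_extension_def)
  have s1: "simple_on K A0 \<longleftrightarrow> (\<forall>h. (\<forall>n. (Ts^^n) h \<in> K) \<longrightarrow> h = 0)"
    by (rule simple_iff[OF K adj1 e1])
  have s2: "simple_on K A0 \<longleftrightarrow> (\<forall>h. (\<forall>n. (T^^n) h \<in> K) \<longrightarrow> h = 0)"
    by (rule simple_iff[OF K adj2 e2])
  have n1: "N_minimal T (orthogonal_complement K) \<longleftrightarrow> (\<forall>h. (\<forall>n. (Ts^^n) h \<in> K) \<longrightarrow> h = 0)"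
    by (rule Nmin_iff[OF K adj1])
  note p1 = pqs_part_iff[OF K adj1]
  note p2 = pqs_part_iff[OF K adj2]
  have "pqs_minimal T Ts (orthogonal_complement K) K \<longleftrightarrow>
        (\<forall>h. (\<forall>n. (Ts^^n) h \<in> K) \<longrightarrow> h = 0) \<and> (\<forall>h. (\<forall>n. (T^^n) h \<in> K) \<longrightarrow> h = 0)"
    unfolding pqs_minimal_def Let_def p1 p2 ..
  then show ?thesis using s1 s2 n1 by blast
qed


end
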